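(* Let $q\ge1$, $\alpha\in(0,2\wedge q)$ and $R>0$. There is a constant $C=C(R)$ (depending also on $\alpha,q$) such that for all $0<t\le t'$ and $0\le r_1,r_2,r_3\le R$, $$\int\!\!\int p_t(w)p_{t'}(z)|w|^{r_1}|z|^{r_2}e^{r_3(|w|+|z|)}(|w-z|^{-\alpha}+1)\,dw\,dz\le C e^{2r_3^2t'}t^{r_1/2}t'^{r_2/2}(t^{-\alpha/2}+1).$$ Moreover, for every $K>0$ there is $C=C(K,R)$ such that for all $x,y\in[-K,K]^q$, $0<t\le t'$ and $0\le r_1,r_2,r_3\le R$, $$\int\!\!\int p_t(x-w)p_{t'}(y-z)|w|^{r_1}|z|^{r_2}e^{r_3(|w|+|z|)}(|w-z|^{-\alpha}+1)\,dw\,dz\le Ce^{2r_3^2t'}(t^{r_1/2}+1)(t'^{r_2/2}+1)(t^{-\alpha/2}+1).$$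
   Context: $p_t(x)=(2\pi t)^{-q/2}\exp(-|x|^2/(2t))$ is the heat kernel on $\mathbb R^q$; all integrals are over $\mathbb R^q$. *)

theory Defs
  imports "HOL-Analysis.Analysis"
begin

definition heat_kernel :: "real \<Rightarrow> 'a::euclidean_space \<Rightarrow> real" where
  "heat_kernel t x = (2 * pi * t) powr (- real DIM('a) / 2) * exp (- (norm x)\<^sup>2 / (2 * t))"

end

theory Submission
  imports Defs
begin



lemma pow_le_fact_exp:
  fixes x :: real assumes "0 \<le> x" shows "x ^ n \<le> fact n * exp x"
proof -
  have "x ^ n /\<^sub>R fact n \<le> (\<Sum>k. x ^ k /\<^sub>R fact k)"
    using sum_le_suminf[OF summable_exp_generic[of x], of "{n}"] assms by auto
  then have "x ^ n / fact n \<le> exp x" by (simp add: exp_def divide_inverse_commute)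
  then show ?thesis by (simp add: field_simps)
qed

lemma nn_integral_lborel_affine:
  fixes f :: "'a::euclidean_space \<Rightarrow> ennreal"
  assumes [measurable]: "f \<in> borel_measurable borel" and c: "c \<noteq> 0"
  shows "(\<integral>\<^sup>+x. f x \<partial>lborel) = ennreal (\<bar>c\<bar>^DIM('a)) * (\<integral>\<^sup>+x. f (t + c *\<^sub>R x) \<partial>lborel)"
  by (subst lborel_affine[OF c, of t])
     (simp add: nn_integral_density nn_integral_distr nn_integral_cmult)

lemma ball_borel_sets[measurable]: "ball (c::'a::metric_space) r \<in> sets borel"
  by simp

lemma emeasure_ball_scale:
  assumes "0 \<le> r"
  shows "emeasure lborel (ball (c::'a::euclidean_space) r) = ennreal (r ^ DIM('a)) * emeasure lborel (ball (0::'a) 1)"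
  using emeasure_lebesgue_ball_conv_unit_ball[OF assms, of c]
  by (simp add: emeasure_lborel_ball_finite emeasure_completion)




lemma summable_gauss_shell:
  "summable (\<lambda>k::nat. exp (- (real k)\<^sup>2 / 2) * (real k + 1) ^ m)"
proof (rule summable_comparison_test')
  show "summable (\<lambda>k. 2 ^ m * fact m * exp 1 * exp (- 1 / 2 :: real) ^ k)"
    by (intro summable_mult summable_geometric) simp
  fix k :: nat assume "k \<ge> 0"
  have a: "((real k + 1) / 2) ^ m \<le> fact m * exp ((real k + 1) / 2)"
    by (rule pow_le_fact_exp) auto
  have b: "(real k + 1) ^ m = 2 ^ m * ((real k + 1) / 2) ^ m"
    by (simp add: power_divide)
  have c: "exp (- (real k)\<^sup>2 / 2) \<le> exp (1/2 - real k)"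
  proof -
    have "(real k - 1)^2 \<ge> 0" by simp
    then show ?thesis by (simp add: power2_eq_square algebra_simps)
  qed
  have d: "exp (1/2 - real k) * exp ((real k + 1) / 2) = exp 1 * exp (- 1 / 2) ^ k"
  proof -
    have "exp (1/2 - real k) * exp ((real k + 1) / 2) = exp (1 + real k * (-1/2))"
      by (simp add: exp_add[symmetric]) (simp add: field_simps)
    also have "\<dots> = exp 1 * exp (real k * (-1/2))" by (simp only: exp_add)
    also have "\<dots> = exp 1 * exp (- 1 / 2) ^ k" by (simp only: exp_of_nat_mult)
    finally show ?thesis .
  qed
  have "exp (- (real k)\<^sup>2 / 2) * (real k + 1) ^ m \<le> exp (1/2 - real k) * (2 ^ m * (fact m * exp ((real k + 1) / 2)))"
    unfolding b by (intro mult_mono c mult_left_mono a) auto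
  also have "\<dots> = 2 ^ m * fact m * (exp (1/2 - real k) * exp ((real k + 1) / 2))" by simp
  finally show "norm (exp (- (real k)\<^sup>2 / 2) * (real k + 1) ^ m) \<le> 2 ^ m * fact m * exp 1 * exp (- 1 / 2) ^ k"
    unfolding d by simp
qed

lemma gauss_finite:
  "(\<integral>\<^sup>+v. ennreal (exp (- (norm (v::'a::euclidean_space))\<^sup>2 / 2)) \<partial>lborel) < \<infinity>"
proof -
  define V where "V = emeasure lborel (ball (0::'a) 1)"
  have Vfin: "V < \<infinity>" unfolding V_def by (rule emeasure_lborel_ball_finite)
  have pt: "ennreal (exp (- (norm v)\<^sup>2 / 2)) \<le>
      (\<Sum>k. ennreal (exp (- (real k)\<^sup>2 / 2)) * indicator (ball (0::'a) (real k + 1)) v)" for v :: 'a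
  proof -
    define k where "k = nat \<lfloor>norm v\<rfloor>"
    have kk: "real k = real_of_int \<lfloor>norm v\<rfloor>" unfolding k_def by simp
    have k1: "real k \<le> norm v" "norm v < real k + 1" unfolding kk by linarith+
    have "exp (- (norm v)\<^sup>2 / 2) \<le> exp (- (real k)\<^sup>2 / 2)"
      using k1 by (auto intro!: power_mono)
    then have "ennreal (exp (- (norm v)\<^sup>2 / 2)) \<le> ennreal (exp (- (real k)\<^sup>2 / 2)) * indicator (ball (0::'a) (real k + 1)) v"
      using k1 by (auto intro!: ennreal_leI simp: indicator_def)
    also have "\<dots> \<le> (\<Sum>k. ennreal (exp (- (real k)\<^sup>2 / 2)) * indicator (ball (0::'a) (real k + 1)) v)"
    proof -
      have "(\<Sum>i\<in>{k}. ennreal (exp (- (real i)\<^sup>2 / 2)) * indicator (ball (0::'a) (real i + 1)) v)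
         \<le> (\<Sum>k. ennreal (exp (- (real k)\<^sup>2 / 2)) * indicator (ball (0::'a) (real k + 1)) v)"
        by (rule sum_le_suminf) auto
      then show ?thesis by (simp only: sum.insert finite.emptyI empty_iff not_False_eq_True sum.empty add_0_right)
    qed
    finally show ?thesis .
  qed
  have "(\<integral>\<^sup>+v. ennreal (exp (- (norm (v::'a))\<^sup>2 / 2)) \<partial>lborel) \<le>
      (\<integral>\<^sup>+v. (\<Sum>k. ennreal (exp (- (real k)\<^sup>2 / 2)) * indicator (ball (0::'a) (real k + 1)) v) \<partial>lborel)"
    by (intro nn_integral_mono pt)
  also have "\<dots> = (\<Sum>k. \<integral>\<^sup>+v. ennreal (exp (- (real k)\<^sup>2 / 2)) * indicator (ball (0::'a) (real k + 1)) v \<partial>lborel)"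
    by (rule nn_integral_suminf) measurable
  also have "\<dots> = (\<Sum>k. ennreal (exp (- (real k)\<^sup>2 / 2) * (real k + 1) ^ DIM('a)) * V)"
  proof (rule suminf_cong)
    fix k :: nat
    have "(\<integral>\<^sup>+v. ennreal (exp (- (real k)\<^sup>2 / 2)) * indicator (ball (0::'a) (real k + 1)) v \<partial>lborel)
       = ennreal (exp (- (real k)\<^sup>2 / 2)) * emeasure lborel (ball (0::'a) (real k + 1))"
      by (rule nn_integral_cmult_indicator) simp
    also have "emeasure lborel (ball (0::'a) (real k + 1)) = ennreal ((real k + 1) ^ DIM('a)) * V"
      unfolding V_def by (rule emeasure_ball_scale) simp
    also have "ennreal (exp (- (real k)\<^sup>2 / 2)) * (ennreal ((real k + 1) ^ DIM('a)) * V)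
       = ennreal (exp (- (real k)\<^sup>2 / 2) * (real k + 1) ^ DIM('a)) * V"
      by (subst ennreal_mult) (auto simp: mult.assoc)
    finally show "(\<integral>\<^sup>+v. ennreal (exp (- (real k)\<^sup>2 / 2)) * indicator (ball (0::'a) (real k + 1)) v \<partial>lborel)
       = ennreal (exp (- (real k)\<^sup>2 / 2) * (real k + 1) ^ DIM('a)) * V" .
  qed
  also have "\<dots> = ennreal (\<Sum>k. exp (- (real k)\<^sup>2 / 2) * (real k + 1) ^ DIM('a)) * V"
    using summable_gauss_shell[of "DIM('a)"] by (simp add: ennreal_suminf_multc suminf_ennreal2)
  also have "\<dots> < \<infinity>" using Vfin by (simp add: ennreal_mult_less_top)
  finally show ?thesis .
qed




lemma sing_finite:
  assumes "0 < \<alpha>" "\<alpha> < real DIM('a::euclidean_space)"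
  shows "(\<integral>\<^sup>+v. indicator (ball (0::'a) 1) v * ennreal (norm v powr (- \<alpha>)) \<partial>lborel) < \<infinity>"
proof -
  define V where "V = emeasure lborel (ball (0::'a) 1)"
  have Vfin: "V < \<infinity>" unfolding V_def by (rule emeasure_lborel_ball_finite)
  define a where "a = (2::real) powr \<alpha>"
  define q where "q = DIM('a)"
  have a_pos: "a > 0" unfolding a_def by simp
  have aq: "a < 2 ^ q" unfolding a_def q_def using assms
    by (metis powr_less_mono powr_realpow one_less_numeral_iff semiring_norm(76) zero_less_numeral)
  have pt: "indicator (ball (0::'a) 1) v * ennreal (norm v powr (- \<alpha>)) \<le>
      (\<Sum>n. ennreal (a * a ^ n) * indicator (ball (0::'a) (2 / 2 ^ n)) v)" for v :: 'a
  proof (cases "v \<in> ball 0 1 \<and> v \<noteq> 0")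
    case False
    then show ?thesis by (auto simp: indicator_def)
  next
    case True
    then have v0: "0 < norm v" "norm v < 1" by auto
    define k where "k = nat \<lfloor>1 / norm v\<rfloor>"
    have kk: "real k = real_of_int \<lfloor>1 / norm v\<rfloor>" unfolding k_def using v0 by simp
    have k1: "real k \<le> 1 / norm v" "1 / norm v < real k + 1" unfolding kk by linarith+
    have "1 < 1 / norm v" using v0 by simp
    then have "k \<ge> 1" using k1 kk by linarith
    then obtain n where n: "2 ^ n \<le> k" "k < 2 ^ (n + 1)"
      using ex_power_ivl1[of 2 k] by auto
    have n1': "real (2 ^ n) \<le> real k" using n(1) by (simp only: of_nat_le_iff)
    have n1'': "(2::real) ^ n \<le> real k" using n1' by (simp only: of_nat_power of_nat_numeral)
    have n1: "2 ^ n \<le> 1 / norm v" using n1'' k1(1) by linarith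
    have n2: "1 / norm v < 2 ^ (n + 1)"
    proof -
      have "k + 1 \<le> 2 ^ (n+1)" using n(2) by simp
      then have "real (k + 1) \<le> real (2 ^ (n+1))" by (simp only: of_nat_le_iff)
      then have "real k + 1 \<le> 2 ^ (n+1)" by simp
      then show ?thesis using k1(2) by linarith
    qed
    have "norm v powr (- \<alpha>) = (1 / norm v) powr \<alpha>"
      using v0 by (simp add: powr_minus powr_divide divide_inverse inverse_powr)
    also have "\<dots> \<le> (2 ^ (n + 1)) powr \<alpha>"
      using n2 v0 assms by (intro powr_mono2) auto
    also have "\<dots> = a * a ^ n"
    proof -
      have "(2::real) ^ (n + 1) = 2 powr (real n + 1)" by (simp add: powr_realpow[symmetric] powr_add)
      then have "(2 ^ (n + 1)) powr \<alpha> = (2::real) powr (\<alpha> + \<alpha> * real n)"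
        by (simp add: powr_powr algebra_simps)
      moreover have "a ^ n = (2::real) powr (\<alpha> * real n)"
        unfolding a_def by (simp add: powr_realpow[symmetric] powr_powr)
      ultimately show ?thesis unfolding a_def by (simp add: powr_add)
    qed
    finally have e1: "norm v powr (- \<alpha>) \<le> a * a ^ n" .
    have e2: "norm v < 2 / 2 ^ n"
    proof -
      have "norm v \<le> 1 / 2 ^ n" using n1 v0
        by (simp add: field_simps)
      also have "\<dots> < 2 / 2 ^ n" by (simp add: divide_strict_right_mono)
      finally show ?thesis .
    qed
    have "indicator (ball (0::'a) 1) v * ennreal (norm v powr (- \<alpha>)) \<le> ennreal (a * a ^ n) * indicator (ball (0::'a) (2 / 2 ^ n)) v"
      using True e1 e2 by (auto simp: indicator_def intro!: ennreal_leI)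
    also have "\<dots> \<le> (\<Sum>n. ennreal (a * a ^ n) * indicator (ball (0::'a) (2 / 2 ^ n)) v)"
    proof -
      have "(\<Sum>i\<in>{n}. ennreal (a * a ^ i) * indicator (ball (0::'a) (2 / 2 ^ i)) v)
         \<le> (\<Sum>n. ennreal (a * a ^ n) * indicator (ball (0::'a) (2 / 2 ^ n)) v)"
        by (rule sum_le_suminf) auto
      then show ?thesis by (simp only: sum.insert finite.emptyI empty_iff not_False_eq_True sum.empty add_0_right)
    qed
    finally show ?thesis .
  qed
  have "(\<integral>\<^sup>+v. indicator (ball (0::'a) 1) v * ennreal (norm v powr (- \<alpha>)) \<partial>lborel) \<le>
      (\<integral>\<^sup>+v. (\<Sum>n. ennreal (a * a ^ n) * indicator (ball (0::'a) (2 / 2 ^ n)) v) \<partial>lborel)"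
    by (intro nn_integral_mono pt)
  also have "\<dots> = (\<Sum>n. \<integral>\<^sup>+v. ennreal (a * a ^ n) * indicator (ball (0::'a) (2 / 2 ^ n)) v \<partial>lborel)"
    by (rule nn_integral_suminf) measurable
  also have "\<dots> = (\<Sum>n. ennreal (a * 2 ^ q * (a / 2 ^ q) ^ n) * V)"
  proof (rule suminf_cong)
    fix n
    have "(2 / 2 ^ n :: real) ^ q = 2 ^ q / (2 ^ q) ^ n"
      by (simp add: power_divide power_mult[symmetric] mult.commute)
    then have "a * a ^ n * (2 / 2 ^ n) ^ q = a * 2 ^ q * (a / 2 ^ q) ^ n"
      by (simp add: power_divide)
    then show "(\<integral>\<^sup>+v. ennreal (a * a ^ n) * indicator (ball (0::'a) (2 / 2 ^ n)) v \<partial>lborel)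
        = ennreal (a * 2 ^ q * (a / 2 ^ q) ^ n) * V"
    proof -
      have "(\<integral>\<^sup>+v. ennreal (a * a ^ n) * indicator (ball (0::'a) (2 / 2 ^ n)) v \<partial>lborel)
         = ennreal (a * a ^ n) * emeasure lborel (ball (0::'a) (2 / 2 ^ n))"
        by (rule nn_integral_cmult_indicator) simp
      also have "emeasure lborel (ball (0::'a) (2 / 2 ^ n)) = ennreal ((2 / 2 ^ n) ^ q) * V"
        unfolding V_def q_def by (rule emeasure_ball_scale) simp
      also have "ennreal (a * a ^ n) * (ennreal ((2 / 2 ^ n) ^ q) * V) = ennreal (a * a ^ n * (2 / 2 ^ n) ^ q) * V"
        using a_pos by (subst (2) ennreal_mult) (auto simp: mult.assoc)
      finally show ?thesis unfolding \<open>a * a ^ n * (2 / 2 ^ n) ^ q = a * 2 ^ q * (a / 2 ^ q) ^ n\<close> .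
    qed
  qed
  also have "\<dots> = ennreal (\<Sum>n. a * 2 ^ q * (a / 2 ^ q) ^ n) * V"
    using a_pos aq
    by (subst ennreal_suminf_multc, subst suminf_ennreal2)
       (auto intro!: summable_mult summable_geometric)
  also have "\<dots> < \<infinity>" using Vfin by (simp add: ennreal_mult_less_top)
  finally show ?thesis .
qed




lemma hk_mass:
  fixes b :: "'a::euclidean_space"
  assumes s: "0 < s"
  shows "(\<integral>\<^sup>+z. ennreal (heat_kernel s (b - z)) \<partial>lborel) =
    ennreal ((2 * pi) powr (- real DIM('a) / 2)) * (\<integral>\<^sup>+v. ennreal (exp (- (norm (v::'a::euclidean_space))\<^sup>2 / 2)) \<partial>lborel)"
proof -
  let ?q = "real DIM('a)"
  have "(\<integral>\<^sup>+z. ennreal (heat_kernel s (b - z)) \<partial>lborel) =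
     ennreal (\<bar>sqrt s\<bar> ^ DIM('a)) * (\<integral>\<^sup>+v. ennreal (heat_kernel s (b - (b + sqrt s *\<^sub>R (v::'a)))) \<partial>lborel)"
    using s by (intro nn_integral_lborel_affine) (auto simp: heat_kernel_def)
  also have "\<dots> = ennreal (\<bar>sqrt s\<bar> ^ DIM('a)) * (\<integral>\<^sup>+v. ennreal ((2 * pi * s) powr (- ?q / 2)) * ennreal (exp (- (norm (v::'a))\<^sup>2 / 2)) \<partial>lborel)"
  proof -
    have "heat_kernel s (b - (b + sqrt s *\<^sub>R v)) = (2 * pi * s) powr (- ?q / 2) * exp (- (norm v)\<^sup>2 / 2)" for v :: 'a
      using s by (simp add: heat_kernel_def power_mult_distrib)
    then show ?thesis using s by (simp add: ennreal_mult'[symmetric])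
  qed
  also have "\<dots> = ennreal (\<bar>sqrt s\<bar> ^ DIM('a)) * ennreal ((2 * pi * s) powr (- ?q / 2)) * (\<integral>\<^sup>+v. ennreal (exp (- (norm (v::'a))\<^sup>2 / 2)) \<partial>lborel)"
    by (subst nn_integral_cmult) (auto simp: mult.assoc)
  also have "ennreal (\<bar>sqrt s\<bar> ^ DIM('a)) * ennreal ((2 * pi * s) powr (- ?q / 2)) = ennreal ((2 * pi) powr (- ?q / 2))"
  proof -
    have "\<bar>sqrt s\<bar> ^ DIM('a) = s powr (?q / 2)"
      using s by (simp add: sqrt_def powr_realpow[symmetric] root_powr_inverse powr_powr)
    moreover have "(2 * pi * s) powr (- ?q / 2) = (2 * pi) powr (- ?q / 2) * s powr (- ?q / 2)"
      using s by (simp add: powr_mult)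
    moreover have "s powr (?q / 2) * s powr (- ?q / 2) = 1"
      using s by (simp add: powr_add[symmetric])
    ultimately show ?thesis using s
      by (simp add: ennreal_mult'[symmetric])
  qed
  finally show ?thesis .
qed

lemma ball_sing_scale:
  fixes w :: "'a::euclidean_space"
  assumes r: "0 < \<rho>"
  shows "(\<integral>\<^sup>+z. indicator (ball w \<rho>) z * ennreal (norm (w - z) powr (- \<alpha>)) \<partial>lborel) =
    ennreal (\<rho> powr (real DIM('a) - \<alpha>)) * (\<integral>\<^sup>+v. indicator (ball (0::'a::euclidean_space) 1) v * ennreal (norm v powr (- \<alpha>)) \<partial>lborel)"
proof -
  have "(\<integral>\<^sup>+z. indicator (ball w \<rho>) z * ennreal (norm (w - z) powr (- \<alpha>)) \<partial>lborel) =
     ennreal (\<bar>\<rho>\<bar> ^ DIM('a)) * (\<integral>\<^sup>+v. indicator (ball w \<rho>) (w + \<rho> *\<^sub>R v) * ennreal (norm (w - (w + \<rho> *\<^sub>R (v::'a))) powr (- \<alpha>)) \<partial>lborel)"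
    using r by (intro nn_integral_lborel_affine) auto
  also have "\<dots> = ennreal (\<bar>\<rho>\<bar> ^ DIM('a)) * (\<integral>\<^sup>+v. ennreal (\<rho> powr (- \<alpha>)) * (indicator (ball (0::'a) 1) v * ennreal (norm v powr (- \<alpha>))) \<partial>lborel)"
  proof -
   have "indicator (ball w \<rho>) (w + \<rho> *\<^sub>R v) * ennreal (norm (w - (w + \<rho> *\<^sub>R v)) powr (- \<alpha>)) =
       ennreal (\<rho> powr (- \<alpha>)) * (indicator (ball (0::'a) 1) v * ennreal (norm v powr (- \<alpha>)))" for v :: 'a
   proof -
    have i: "indicator (ball w \<rho>) (w + \<rho> *\<^sub>R v) = (indicator (ball (0::'a) 1) v :: ennreal)"
      using r by (simp add: indicator_def dist_norm)
    have "norm (w - (w + \<rho> *\<^sub>R v)) powr (- \<alpha>) = \<rho> powr (- \<alpha>) * norm v powr (- \<alpha>)"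
      using r by (simp add: powr_mult)
    then show ?thesis
      unfolding i by (simp add: ennreal_mult' mult.left_commute)
   qed
   then show ?thesis by simp
  qed
  also have "\<dots> = ennreal (\<bar>\<rho>\<bar> ^ DIM('a)) * ennreal (\<rho> powr (- \<alpha>)) * (\<integral>\<^sup>+v. indicator (ball (0::'a) 1) v * ennreal (norm v powr (- \<alpha>)) \<partial>lborel)"
    by (subst nn_integral_cmult) (auto simp: mult.assoc)
  also have "ennreal (\<bar>\<rho>\<bar> ^ DIM('a)) * ennreal (\<rho> powr (- \<alpha>)) = ennreal (\<rho> powr (real DIM('a) - \<alpha>))"
    using r by (simp add: ennreal_mult'[symmetric] powr_realpow[symmetric] powr_add[symmetric])
  finally show ?thesis .
qed




lemma hk_le: "0 < s \<Longrightarrow> heat_kernel s x \<le> (2 * pi * s) powr (- real DIM('a) / 2)"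
  for x :: "'a::euclidean_space"
  by (simp add: heat_kernel_def)

lemma hk_nonneg: "0 \<le> heat_kernel s x"
  by (simp add: heat_kernel_def)

lemma hk_sing:
  fixes b w :: "'a::euclidean_space"
  assumes s: "0 < s" and a: "0 \<le> \<alpha>"
  shows "(\<integral>\<^sup>+z. ennreal (heat_kernel s (b - z) * norm (w - z) powr (- \<alpha>)) \<partial>lborel) \<le>
    ennreal (s powr (- \<alpha> / 2)) * (ennreal ((2 * pi) powr (- real DIM('a) / 2)) *
       (\<integral>\<^sup>+v. ennreal (exp (- (norm (v::'a))\<^sup>2 / 2)) \<partial>lborel) +
      ennreal ((2 * pi) powr (- real DIM('a) / 2)) *
       (\<integral>\<^sup>+v. indicator (ball (0::'a) 1) v * ennreal (norm v powr (- \<alpha>)) \<partial>lborel))"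
proof -
  let ?q = "real DIM('a)"
  let ?P = "ennreal ((2 * pi) powr (- ?q / 2))"
  let ?G = "(\<integral>\<^sup>+v. ennreal (exp (- (norm (v::'a))\<^sup>2 / 2)) \<partial>lborel)"
  let ?I = "(\<integral>\<^sup>+v. indicator (ball (0::'a) 1) v * ennreal (norm v powr (- \<alpha>)) \<partial>lborel)"
  have pt: "ennreal (heat_kernel s (b - z) * norm (w - z) powr (- \<alpha>)) \<le>
      ennreal (s powr (- \<alpha> / 2)) * ennreal (heat_kernel s (b - z)) +
      ennreal ((2 * pi * s) powr (- ?q / 2)) * (indicator (ball w (sqrt s)) z * ennreal (norm (w - z) powr (- \<alpha>)))" for z
  proof (cases "z \<in> ball w (sqrt s)")
    case True
    have "heat_kernel s (b - z) * norm (w - z) powr (- \<alpha>) \<le> (2 * pi * s) powr (- ?q / 2) * norm (w - z) powr (- \<alpha>)"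
      by (intro mult_right_mono hk_le s) auto
    then have "ennreal (heat_kernel s (b - z) * norm (w - z) powr (- \<alpha>)) \<le>
      ennreal ((2 * pi * s) powr (- ?q / 2)) * (indicator (ball w (sqrt s)) z * ennreal (norm (w - z) powr (- \<alpha>)))"
      using True by (simp add: ennreal_mult'[symmetric] ennreal_leI)
    then show ?thesis by (rule order_trans) simp
  next
    case False
    then have d: "sqrt s \<le> norm (w - z)" by (simp add: dist_norm)
    have "norm (w - z) powr (- \<alpha>) \<le> sqrt s powr (- \<alpha>)"
      using s a d by (intro powr_mono2') auto
    also have "sqrt s powr (- \<alpha>) = s powr (- \<alpha> / 2)"
      using s by (simp add: powr_half_sqrt[symmetric] powr_powr)
    finally have "heat_kernel s (b - z) * norm (w - z) powr (- \<alpha>) \<le> s powr (- \<alpha> / 2) * heat_kernel s (b - z)"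
      by (metis hk_nonneg mult.commute mult_left_mono)
    then have "ennreal (heat_kernel s (b - z) * norm (w - z) powr (- \<alpha>)) \<le>
      ennreal (s powr (- \<alpha> / 2)) * ennreal (heat_kernel s (b - z))"
      by (simp add: ennreal_mult'[symmetric] ennreal_leI hk_nonneg)
    then show ?thesis by (rule order_trans) simp
  qed
  have "(\<integral>\<^sup>+z. ennreal (heat_kernel s (b - z) * norm (w - z) powr (- \<alpha>)) \<partial>lborel) \<le>
     (\<integral>\<^sup>+z. ennreal (s powr (- \<alpha> / 2)) * ennreal (heat_kernel s (b - z)) +
      ennreal ((2 * pi * s) powr (- ?q / 2)) * (indicator (ball w (sqrt s)) z * ennreal (norm (w - z) powr (- \<alpha>))) \<partial>lborel)"
    by (intro nn_integral_mono pt)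
  also have "\<dots> = ennreal (s powr (- \<alpha> / 2)) * (\<integral>\<^sup>+z. ennreal (heat_kernel s (b - z)) \<partial>lborel) +
      ennreal ((2 * pi * s) powr (- ?q / 2)) * (\<integral>\<^sup>+z. indicator (ball w (sqrt s)) z * ennreal (norm (w - z) powr (- \<alpha>)) \<partial>lborel)"
    by (subst nn_integral_add) (auto simp: nn_integral_cmult heat_kernel_def)
  also have "\<dots> = ennreal (s powr (- \<alpha> / 2)) * (?P * ?G) +
      ennreal ((2 * pi * s) powr (- ?q / 2)) * (ennreal (sqrt s powr (?q - \<alpha>)) * ?I)"
    using s by (simp add: hk_mass ball_sing_scale)
  also have "ennreal ((2 * pi * s) powr (- ?q / 2)) * (ennreal (sqrt s powr (?q - \<alpha>)) * ?I) =
     ennreal (s powr (- \<alpha> / 2)) * (?P * ?I)"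
  proof -
    have "(2 * pi * s) powr (- ?q / 2) * sqrt s powr (?q - \<alpha>) = s powr (- \<alpha> / 2) * (2 * pi) powr (- ?q / 2)"
      using s by (simp add: powr_mult powr_half_sqrt[symmetric] powr_powr powr_add[symmetric] algebra_simps diff_divide_distrib)
    then show ?thesis using s
      by (simp add: ennreal_mult'[symmetric] mult.assoc[symmetric] del: ennreal_mult)
  qed
  finally show ?thesis by (simp add: distrib_left)
qed




lemma hk_meas[measurable]: "heat_kernel s \<in> borel_measurable (borel :: 'a::euclidean_space measure)"
  unfolding heat_kernel_def by measurable

lemma core_bound:
  assumes a0: "0 < \<alpha>" and aq: "\<alpha> < real DIM('a::euclidean_space)"
  shows "\<exists>Cc\<ge>0. \<forall>M (a::'a) (b::'a) s s'. 0 \<le> M \<longrightarrow> 0 < s \<longrightarrow> s \<le> s' \<longrightarrow>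
    (\<integral>\<^sup>+w. \<integral>\<^sup>+z. ennreal (M * heat_kernel s (a - w) * heat_kernel s' (b - z) * (norm (w - z) powr (- \<alpha>) + 1)) \<partial>lborel \<partial>lborel)
    \<le> ennreal (M * Cc * (s powr (- \<alpha> / 2) + 1))"
proof -
  let ?q = "real DIM('a)"
  define Pr where "Pr = (2 * pi) powr (- ?q / 2)"
  define G where "G = (\<integral>\<^sup>+v. ennreal (exp (- (norm (v::'a))\<^sup>2 / 2)) \<partial>lborel)"
  define I where "I = (\<integral>\<^sup>+v. indicator (ball (0::'a) 1) v * ennreal (norm v powr (- \<alpha>)) \<partial>lborel)"
  have Gf: "G < \<infinity>" unfolding G_def by (rule gauss_finite)
  have If: "I < \<infinity>" unfolding I_def using a0 aq by (rule sing_finite)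
  obtain Gr where Gr: "G = ennreal Gr" "0 \<le> Gr" using Gf by (cases G) auto
  obtain Ir where Ir: "I = ennreal Ir" "0 \<le> Ir" using If by (cases I) auto
  have Pr0: "0 \<le> Pr" unfolding Pr_def by simp
  define Cc where "Cc = Pr * Gr * max (Pr * Gr + Pr * Ir) (Pr * Gr)"
  have Cc0: "0 \<le> Cc" unfolding Cc_def using Pr0 Gr Ir by simp
  have mass: "(\<integral>\<^sup>+z. ennreal (heat_kernel s (b - z)) \<partial>lborel) = ennreal (Pr * Gr)" if "0 < s" for s and b :: 'a
    using hk_mass[OF that, of b] unfolding G_def[symmetric] Pr_def[symmetric] Gr(1)
    by (simp add: ennreal_mult' Pr0 Gr(2))
  have main: "(\<integral>\<^sup>+w. \<integral>\<^sup>+z. ennreal (M * heat_kernel s (a - w) * heat_kernel s' (b - z) * (norm (w - z) powr (- \<alpha>) + 1)) \<partial>lborel \<partial>lborel)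
    \<le> ennreal (M * Cc * (s powr (- \<alpha> / 2) + 1))"
    if M: "0 \<le> M" and s: "0 < s" and ss: "s \<le> s'" for M s s' :: real and a b :: 'a
  proof -
    have s': "0 < s'" using s ss by linarith
    have inner: "(\<integral>\<^sup>+z. ennreal (M * heat_kernel s (a - w) * heat_kernel s' (b - z) * (norm (w - z) powr (- \<alpha>) + 1)) \<partial>lborel)
        \<le> ennreal (M * heat_kernel s (a - w)) * ennreal (s powr (- \<alpha> / 2) * (Pr * Gr + Pr * Ir) + Pr * Gr)" for w :: 'a
    proof -
      have eq: "ennreal (M * heat_kernel s (a - w) * heat_kernel s' (b - z) * (norm (w - z) powr (- \<alpha>) + 1)) =
        ennreal (M * heat_kernel s (a - w)) * (ennreal (heat_kernel s' (b - z) * norm (w - z) powr (- \<alpha>)) + ennreal (heat_kernel s' (b - z)))" for z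
      proof -
        have r: "M * heat_kernel s (a - w) * heat_kernel s' (b - z) * (norm (w - z) powr (- \<alpha>) + 1) =
          (M * heat_kernel s (a - w)) * (heat_kernel s' (b - z) * norm (w - z) powr (- \<alpha>) + heat_kernel s' (b - z))"
          by (simp add: algebra_simps)
        have n: "0 \<le> M * heat_kernel s (a - w)" "0 \<le> heat_kernel s' (b - z) * norm (w - z) powr (- \<alpha>)" "0 \<le> heat_kernel s' (b - z)"
          using M hk_nonneg[of s "a - w"] hk_nonneg[of s' "b - z"] by auto
        show ?thesis unfolding r
          by (simp only: ennreal_mult[OF n(1) add_nonneg_nonneg[OF n(2) n(3)]] ennreal_plus[OF n(2) n(3)])
      qed
      have "(\<integral>\<^sup>+z. ennreal (M * heat_kernel s (a - w) * heat_kernel s' (b - z) * (norm (w - z) powr (- \<alpha>) + 1)) \<partial>lborel)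
         = ennreal (M * heat_kernel s (a - w)) * ((\<integral>\<^sup>+z. ennreal (heat_kernel s' (b - z) * norm (w - z) powr (- \<alpha>)) \<partial>lborel) + (\<integral>\<^sup>+z. ennreal (heat_kernel s' (b - z)) \<partial>lborel))"
      proof -
        have ma: "(\<lambda>z. ennreal (heat_kernel s' (b - z) * norm (w - z) powr (- \<alpha>))) \<in> borel_measurable lborel"
          by measurable
        have mb: "(\<lambda>z. ennreal (heat_kernel s' (b - z))) \<in> borel_measurable lborel"
          by measurable
        show ?thesis unfolding eq
          by (simp only: nn_integral_cmult[OF borel_measurable_add[OF ma mb]] nn_integral_add[OF ma mb])
      qed
      also have "\<dots> \<le> ennreal (M * heat_kernel s (a - w)) * (ennreal (s' powr (- \<alpha> / 2)) * (ennreal Pr * G + ennreal Pr * I) + ennreal (Pr * Gr))"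
      proof -
        have hs: "(\<integral>\<^sup>+z. ennreal (heat_kernel s' (b - z) * norm (w - z) powr (- \<alpha>)) \<partial>lborel) \<le>
            ennreal (s' powr (- \<alpha> / 2)) * (ennreal Pr * G + ennreal Pr * I)"
          unfolding Pr_def G_def I_def using a0 by (intro hk_sing s') simp
        show ?thesis
          by (rule mult_left_mono[OF add_mono[OF hs]]) (simp_all add: mass[OF s'])
      qed
      also have "\<dots> = ennreal (M * heat_kernel s (a - w)) * ennreal (s' powr (- \<alpha> / 2) * (Pr * Gr + Pr * Ir) + Pr * Gr)"
      proof -
        have "ennreal (s' powr (- \<alpha> / 2)) * (ennreal Pr * G + ennreal Pr * I) + ennreal (Pr * Gr)
          = ennreal (s' powr (- \<alpha> / 2) * (Pr * Gr + Pr * Ir) + Pr * Gr)"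
        proof -
          define x where "x = s' powr (- \<alpha> / 2)"
          have x0: "0 \<le> x" unfolding x_def by simp
          have "ennreal (x * (Pr * Gr + Pr * Ir) + Pr * Gr) = ennreal (x * (Pr * Gr + Pr * Ir)) + ennreal (Pr * Gr)"
            using x0 Gr(2) Ir(2) Pr0 by (intro ennreal_plus) auto
          also have "ennreal (x * (Pr * Gr + Pr * Ir)) = ennreal x * ennreal (Pr * Gr + Pr * Ir)"
            using x0 Gr(2) Ir(2) Pr0 by (intro ennreal_mult) auto
          also have "ennreal (Pr * Gr + Pr * Ir) = ennreal (Pr * Gr) + ennreal (Pr * Ir)"
            using Gr(2) Ir(2) Pr0 by (intro ennreal_plus) auto
          also have "ennreal (Pr * Gr) = ennreal Pr * ennreal Gr"
            using Gr(2) Pr0 by (intro ennreal_mult) auto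
          also have "ennreal (Pr * Ir) = ennreal Pr * ennreal Ir"
            using Ir(2) Pr0 by (intro ennreal_mult) auto
          finally have F: "ennreal (x * (Pr * Gr + Pr * Ir) + Pr * Gr) = ennreal x * (ennreal Pr * ennreal Gr + ennreal Pr * ennreal Ir) + ennreal Pr * ennreal Gr" .
          show ?thesis unfolding x_def[symmetric] Gr(1) Ir(1) F using ennreal_mult[OF Pr0 Gr(2)] by simp
        qed
        then show ?thesis by simp
      qed
      also have "\<dots> \<le> ennreal (M * heat_kernel s (a - w)) * ennreal (s powr (- \<alpha> / 2) * (Pr * Gr + Pr * Ir) + Pr * Gr)"
      proof -
        have p: "s' powr (- \<alpha> / 2) \<le> s powr (- \<alpha> / 2)"
          by (rule powr_mono2') (use s ss a0 in auto)
        have K0: "0 \<le> Pr * Gr + Pr * Ir" using Gr(2) Ir(2) Pr0 by simp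
        have "s' powr (- \<alpha> / 2) * (Pr * Gr + Pr * Ir) + Pr * Gr \<le> s powr (- \<alpha> / 2) * (Pr * Gr + Pr * Ir) + Pr * Gr"
          using mult_right_mono[OF p K0] by simp
        then show ?thesis by (rule mult_left_mono[OF ennreal_leI]) simp
      qed
      finally show ?thesis .
    qed
    have "(\<integral>\<^sup>+w. \<integral>\<^sup>+z. ennreal (M * heat_kernel s (a - w) * heat_kernel s' (b - z) * (norm (w - z) powr (- \<alpha>) + 1)) \<partial>lborel \<partial>lborel)
       \<le> (\<integral>\<^sup>+w. ennreal M * ennreal (heat_kernel s (a - w)) * ennreal (s powr (- \<alpha> / 2) * (Pr * Gr + Pr * Ir) + Pr * Gr) \<partial>lborel)"
      using M by (intro nn_integral_mono order_trans[OF inner]) (simp add: ennreal_mult' hk_nonneg)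
    also have "\<dots> = ennreal M * (\<integral>\<^sup>+w. ennreal (heat_kernel s (a - w)) \<partial>lborel) * ennreal (s powr (- \<alpha> / 2) * (Pr * Gr + Pr * Ir) + Pr * Gr)"
    proof -
      have ma: "(\<lambda>w. ennreal (heat_kernel s (a - w))) \<in> borel_measurable lborel"
        by measurable
      have mb: "(\<lambda>w. ennreal M * ennreal (heat_kernel s (a - w))) \<in> borel_measurable lborel"
        by measurable
      show ?thesis
        by (simp only: nn_integral_multc[OF mb] nn_integral_cmult[OF ma])
    qed
    also have "\<dots> = ennreal (M * (Pr * Gr) * (s powr (- \<alpha> / 2) * (Pr * Gr + Pr * Ir) + Pr * Gr))"
    proof -
      have n: "0 \<le> M" "0 \<le> Pr * Gr" "0 \<le> s powr (- \<alpha> / 2) * (Pr * Gr + Pr * Ir) + Pr * Gr"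
        using M Gr(2) Ir(2) Pr0 by auto
      show ?thesis unfolding mass[OF s]
        by (simp only: ennreal_mult[OF mult_nonneg_nonneg[OF n(1) n(2)] n(3)] ennreal_mult[OF n(1) n(2)])
    qed
    also have "\<dots> \<le> ennreal (M * Cc * (s powr (- \<alpha> / 2) + 1))"
    proof (intro ennreal_leI)
      have "s powr (- \<alpha> / 2) * (Pr * Gr + Pr * Ir) + Pr * Gr \<le> max (Pr * Gr + Pr * Ir) (Pr * Gr) * (s powr (- \<alpha> / 2) + 1)"
      proof -
        define m where "m = max (Pr * Gr + Pr * Ir) (Pr * Gr)"
        define x where "x = s powr (- \<alpha> / 2)"
        have x0: "0 \<le> x" unfolding x_def by simp
        have h1: "x * (Pr * Gr + Pr * Ir) \<le> x * m" unfolding m_def using x0 by (intro mult_left_mono) auto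
        have h2: "Pr * Gr \<le> m" unfolding m_def by simp
        have e: "m * (x + 1) = x * m + m" by (simp add: algebra_simps)
        show ?thesis using h1 h2 e unfolding m_def[symmetric] x_def[symmetric] by linarith
      qed
      from mult_left_mono[OF this, of "M * (Pr * Gr)"]
      show "M * (Pr * Gr) * (s powr (- \<alpha> / 2) * (Pr * Gr + Pr * Ir) + Pr * Gr) \<le> M * Cc * (s powr (- \<alpha> / 2) + 1)"
        using M Pr0 Gr unfolding Cc_def by (simp add: mult.assoc)
    qed
    finally show "(\<integral>\<^sup>+w. \<integral>\<^sup>+z. ennreal (M * heat_kernel s (a - w) * heat_kernel s' (b - z) * (norm (w - z) powr (- \<alpha>) + 1)) \<partial>lborel \<partial>lborel)
    \<le> ennreal (M * Cc * (s powr (- \<alpha> / 2) + 1))" .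
  qed
  show ?thesis
    apply (rule exI[of _ Cc])
    apply (rule conjI[OF Cc0])
    apply (intro allI impI)
    apply (rule main)
    apply assumption+
    done
qed




lemma poly_gauss_bound:
  fixes u r R :: real
  assumes u: "0 \<le> u" and r: "0 \<le> r" "r \<le> R"
  shows "u powr r * exp (- u\<^sup>2 / 8) \<le> 1 + 8 ^ nat \<lceil>R\<rceil> * fact (nat \<lceil>R\<rceil>)"
proof -
  define N where "N = nat \<lceil>R\<rceil>"
  have e1: "exp (- u\<^sup>2 / 8) \<le> 1" by simp
  have e0: "0 \<le> exp (- u\<^sup>2 / 8)" by simp
  show ?thesis
  proof (cases "u \<le> 1")
    case True
    have "u powr r \<le> 1" using True u r by (cases "u = 0") (auto intro: powr_le1)
    then have "u powr r * exp (- u\<^sup>2 / 8) \<le> 1 * 1" using e1 e0 by (intro mult_mono) auto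
    moreover have "(0::real) \<le> 8 ^ N * fact N" by simp
    ultimately show ?thesis unfolding N_def[symmetric] by linarith
  next
    case False
    have RN: "R \<le> real N" unfolding N_def by linarith
    have "u powr r \<le> u powr (2 * real N)"
      using False r RN by (intro powr_mono) auto
    also have "\<dots> = u ^ (2 * N)"
      using False by (subst powr_realpow[symmetric]) auto
    also have "\<dots> = (u\<^sup>2 / 8) ^ N * 8 ^ N"
      by (simp add: power_mult power_divide)
    also have "\<dots> \<le> fact N * exp (u\<^sup>2 / 8) * 8 ^ N"
      by (intro mult_right_mono pow_le_fact_exp) auto
    finally have "u powr r * exp (- u\<^sup>2 / 8) \<le> fact N * exp (u\<^sup>2 / 8) * 8 ^ N * exp (- u\<^sup>2 / 8)"
      using e0 by (rule mult_right_mono)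
    also have "\<dots> = fact N * 8 ^ N"
      by (simp add: exp_minus field_simps)
    finally have "u powr r * exp (- u\<^sup>2 / 8) \<le> 8 ^ N * fact N" by (simp only: mult.commute)
    then show ?thesis unfolding N_def by linarith
  qed
qed


lemma exp_complete_square:
  fixes n r3 t :: real assumes t: "0 < t"
  shows "exp (- n\<^sup>2 / (2 * t)) * exp (r3 * n) \<le> exp (r3\<^sup>2 * t) * (exp (- n\<^sup>2 / (8 * t)) * exp (- n\<^sup>2 / (8 * t)))"
proof -
  have "(n - 2 * r3 * t)\<^sup>2 / (4 * t) \<ge> 0" using t by simp
  moreover have "(n - 2 * r3 * t)\<^sup>2 / (4 * t) = n\<^sup>2 / (4 * t) - r3 * n + r3\<^sup>2 * t"
    using t by (simp add: field_simps power2_eq_square)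
  ultimately have h: "r3 * n \<le> n\<^sup>2 / (4 * t) + r3\<^sup>2 * t" by linarith
  have e: "- n\<^sup>2 / (8 * t) + - n\<^sup>2 / (8 * t) = - n\<^sup>2 / (2 * t) + n\<^sup>2 / (4 * t)"
    using t by (simp add: field_simps)
  have "- n\<^sup>2 / (2 * t) + r3 * n \<le> r3\<^sup>2 * t + (- n\<^sup>2 / (8 * t) + - n\<^sup>2 / (8 * t))"
    unfolding e using h by linarith
  then show ?thesis by (simp only: exp_add[symmetric] exp_le_cancel_iff)
qed

lemma hk_scale4:
  assumes t: "0 < t"
  shows "heat_kernel t (v::'a::euclidean_space) = 2 ^ DIM('a) * (heat_kernel (4 * t) v * exp (norm v ^ 2 / (8 * t))) * exp (- (norm v)\<^sup>2 / (2 * t))"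
proof -
  let ?q = "real DIM('a)"
  have "(2 * pi * (4 * t)) powr (- ?q / 2) = 4 powr (- ?q / 2) * (2 * pi * t) powr (- ?q / 2)"
    using t by (simp add: powr_mult[symmetric] mult_ac)
  moreover have "(4::real) powr (- ?q / 2) = 1 / 2 ^ DIM('a)"
  proof -
    have "(4::real) powr (- ?q / 2) = (2 powr 2) powr (- ?q / 2)" by simp
    also have "\<dots> = 2 powr (- ?q)" by (simp only: powr_powr) simp
    also have "\<dots> = 1 / 2 ^ DIM('a)" by (simp add: powr_minus powr_realpow divide_inverse)
    finally show ?thesis .
  qed
  ultimately have "(2 * pi * (4 * t)) powr (- ?q / 2) = (2 * pi * t) powr (- ?q / 2) / 2 ^ DIM('a)" by simp
  then show ?thesis
    using t unfolding heat_kernel_def by (simp add: exp_minus field_simps)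
qed

lemma powr_gauss_t:
  fixes n t r R :: real
  assumes t: "0 < t" and n: "0 \<le> n" and r: "0 \<le> r" "r \<le> R"
  shows "n powr r * exp (- n\<^sup>2 / (8 * t)) \<le> (1 + 8 ^ nat \<lceil>R\<rceil> * fact (nat \<lceil>R\<rceil>)) * t powr (r / 2)"
proof -
  define u where "u = n / sqrt t"
  have u0: "0 \<le> u" unfolding u_def using n t by simp
  have nu: "n = sqrt t * u" unfolding u_def using t by simp
  have "n powr r = t powr (r / 2) * u powr r"
    unfolding nu using t u0 by (simp add: powr_mult powr_half_sqrt[symmetric] powr_powr)
  moreover have "n\<^sup>2 / (8 * t) = u\<^sup>2 / 8"
    unfolding nu using t by (simp add: power_mult_distrib)
  ultimately have "n powr r * exp (- n\<^sup>2 / (8 * t)) = t powr (r / 2) * (u powr r * exp (- u\<^sup>2 / 8))"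
    by (simp add: minus_divide_left[symmetric])
  also have "\<dots> \<le> t powr (r / 2) * (1 + 8 ^ nat \<lceil>R\<rceil> * fact (nat \<lceil>R\<rceil>))"
    by (intro mult_left_mono poly_gauss_bound u0 r) simp
  finally show ?thesis by (simp add: mult.commute)
qed


lemma hk_exp_bound:
  assumes t: "0 < t"
  shows "heat_kernel t (v::'a::euclidean_space) * exp (r3 * norm v) \<le>
    2 ^ DIM('a) * exp (r3\<^sup>2 * t) * heat_kernel (4 * t) v * exp (- (norm v)\<^sup>2 / (8 * t))"
proof -
  define n where "n = norm v"
  define H where "H = heat_kernel (4 * t) v"
  have H0: "0 \<le> H" unfolding H_def by (rule hk_nonneg)
  have eq: "heat_kernel t v = 2 ^ DIM('a) * (H * exp (n ^ 2 / (8 * t))) * exp (- n\<^sup>2 / (2 * t))"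
    unfolding H_def n_def by (rule hk_scale4[OF t])
  have "heat_kernel t v * exp (r3 * n) = 2 ^ DIM('a) * (H * exp (n ^ 2 / (8 * t))) * (exp (- n\<^sup>2 / (2 * t)) * exp (r3 * n))"
    unfolding eq by simp
  also have "\<dots> \<le> 2 ^ DIM('a) * (H * exp (n ^ 2 / (8 * t))) * (exp (r3\<^sup>2 * t) * (exp (- n\<^sup>2 / (8 * t)) * exp (- n\<^sup>2 / (8 * t))))"
    using H0 by (intro mult_left_mono exp_complete_square t) auto
  also have "\<dots> = 2 ^ DIM('a) * exp (r3\<^sup>2 * t) * H * exp (- n\<^sup>2 / (8 * t)) * (exp (n ^ 2 / (8 * t)) * exp (- n\<^sup>2 / (8 * t)))"
    by (simp only: mult_ac)
  also have "exp (n ^ 2 / (8 * t)) * exp (- n\<^sup>2 / (8 * t)) = 1"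
    by (simp add: exp_add[symmetric])
  finally show ?thesis unfolding n_def H_def by simp
qed

lemma hk_factor0:
  assumes t: "0 < t"
  shows "heat_kernel t (v::'a::euclidean_space) * exp (r3 * norm v) \<le>
    2 ^ DIM('a) * exp (r3\<^sup>2 * t) * heat_kernel (4 * t) v"
proof -
  have "2 ^ DIM('a) * exp (r3\<^sup>2 * t) * heat_kernel (4 * t) v * exp (- (norm v)\<^sup>2 / (8 * t))
      \<le> 2 ^ DIM('a) * exp (r3\<^sup>2 * t) * heat_kernel (4 * t) v * 1"
    using t by (intro mult_left_mono mult_nonneg_nonneg hk_nonneg) auto
  from order_trans[OF hk_exp_bound[OF t, of v r3] this] show ?thesis by simp
qed

lemma hk_factor:
  assumes t: "0 < t" and r: "0 \<le> r" "r \<le> R"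
  shows "heat_kernel t (v::'a::euclidean_space) * exp (r3 * norm v) * norm v powr r \<le>
    2 ^ DIM('a) * (1 + 8 ^ nat \<lceil>R\<rceil> * fact (nat \<lceil>R\<rceil>)) * exp (r3\<^sup>2 * t) * t powr (r / 2) * heat_kernel (4 * t) v"
proof -
  define B where "B = (1 + 8 ^ nat \<lceil>R\<rceil> * fact (nat \<lceil>R\<rceil>) :: real)"
  define A where "A = 2 ^ DIM('a) * exp (r3\<^sup>2 * t) * heat_kernel (4 * t) v"
  have A0: "0 \<le> A" unfolding A_def by (intro mult_nonneg_nonneg hk_nonneg) auto
  have "heat_kernel t v * exp (r3 * norm v) * norm v powr r \<le> A * exp (- (norm v)\<^sup>2 / (8 * t)) * norm v powr r"
    using hk_exp_bound[OF t, of v r3] unfolding A_def by (intro mult_right_mono) auto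
  also have "\<dots> = A * (norm v powr r * exp (- (norm v)\<^sup>2 / (8 * t)))" by (simp only: mult_ac)
  also have "\<dots> \<le> A * (B * t powr (r / 2))"
    unfolding B_def using A0 by (intro mult_left_mono powr_gauss_t t r) auto
  finally show ?thesis unfolding A_def B_def by (simp only: mult_ac)
qed


lemma shift_powr_bound:
  fixes n m D r R :: real
  assumes "0 \<le> n" "0 \<le> m" "0 \<le> D" "m \<le> D + n" "0 \<le> r" "r \<le> R"
  shows "m powr r \<le> (2 * D + 1) powr R + 2 powr R * n powr r"
proof -
  have P: "0 \<le> (2 * D + 1) powr R" "0 \<le> 2 powr R * n powr r" by simp_all
  show ?thesis
  proof (cases "m = 0")
    case True then show ?thesis using P by simp
  next
    case False
    then have m0: "0 < m" using assms by simp
    have mm: "m powr r \<le> (D + n) powr r" using assms m0 by (intro powr_mono2) auto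
    show ?thesis
    proof (cases "n \<le> D")
      case True
      have "(D + n) powr r \<le> (2 * D + 1) powr r" using True assms m0 by (intro powr_mono2) auto
      also have "\<dots> \<le> (2 * D + 1) powr R" using assms by (intro powr_mono) auto
      finally show ?thesis using mm P by linarith
    next
      case False
      have "(D + n) powr r \<le> (2 * n) powr r" using False assms m0 by (intro powr_mono2) auto
      also have "\<dots> = 2 powr r * n powr r" using assms by (simp add: powr_mult)
      also have "\<dots> \<le> 2 powr R * n powr r" using assms by (intro mult_right_mono powr_mono) auto
      finally show ?thesis using mm P by linarith
    qed
  qed
qed

lemma hk_factor_shift:
  fixes x w :: "'a::euclidean_space"
  assumes t: "0 < t" and r: "0 \<le> r" "r \<le> R" and r3: "0 \<le> r3" "r3 \<le> R"
    and D: "0 \<le> D" "norm x \<le> D"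
  shows "heat_kernel t (x - w) * exp (r3 * norm w) * norm w powr r \<le>
    exp (R * D) * ((2 * D + 1) powr R * 2 ^ DIM('a) + 2 powr R * (2 ^ DIM('a) * (1 + 8 ^ nat \<lceil>R\<rceil> * fact (nat \<lceil>R\<rceil>))))
     * exp (r3\<^sup>2 * t) * (t powr (r / 2) + 1) * heat_kernel (4 * t) (x - w)"
proof -
  define v where "v = x - w"
  define n where "n = norm v"
  define h where "h = heat_kernel t v"
  define H where "H = heat_kernel (4 * t) v"
  define B where "B = 2 ^ DIM('a) * (1 + 8 ^ nat \<lceil>R\<rceil> * fact (nat \<lceil>R\<rceil>) :: real)"
  define W where "W = (2 * D + 1) powr R"
  define E where "E = exp (r3\<^sup>2 * t)"
  have h0: "0 \<le> h" "0 \<le> H" unfolding h_def H_def by (simp_all add: hk_nonneg)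
  have n0: "0 \<le> n" unfolding n_def by simp
  have B0: "0 \<le> B" unfolding B_def by simp
  have W0: "0 \<le> W" unfolding W_def by simp
  have E0: "0 \<le> E" unfolding E_def by simp
  have wn: "norm w \<le> D + n"
  proof -
    have "norm w = norm (x - v)" unfolding v_def by simp
    also have "\<dots> \<le> norm x + norm v" by (rule norm_triangle_ineq4)
    finally show ?thesis using D unfolding n_def by simp
  qed
  have ex: "exp (r3 * norm w) \<le> exp (R * D) * exp (r3 * n)"
  proof -
    have "r3 * norm w \<le> r3 * (D + n)" using wn r3 by (intro mult_left_mono) auto
    also have "\<dots> = r3 * D + r3 * n" by (simp add: algebra_simps)
    also have "r3 * D \<le> R * D" using r3 D by (intro mult_right_mono) auto
    finally show ?thesis by (simp add: exp_add[symmetric])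
  qed
  have pw: "norm w powr r \<le> W + 2 powr R * n powr r"
    unfolding W_def using n0 D wn r by (intro shift_powr_bound) auto
  have f0: "h * exp (r3 * n) \<le> 2 ^ DIM('a) * E * H"
    unfolding h_def H_def E_def n_def by (rule hk_factor0[OF t])
  have f1: "h * exp (r3 * n) * n powr r \<le> B * E * t powr (r / 2) * H"
    unfolding h_def H_def E_def n_def B_def using hk_factor[OF t r] by (simp only: mult_ac)
  have "heat_kernel t (x - w) * exp (r3 * norm w) * norm w powr r = h * exp (r3 * norm w) * norm w powr r"
    unfolding h_def v_def ..
  also have "\<dots> \<le> h * (exp (R * D) * exp (r3 * n)) * (W + 2 powr R * n powr r)"
    using h0 ex pw by (intro mult_mono mult_left_mono) auto
  also have "\<dots> = exp (R * D) * (W * (h * exp (r3 * n)) + 2 powr R * (h * exp (r3 * n) * n powr r))"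
    by (simp add: algebra_simps)
  also have "\<dots> \<le> exp (R * D) * (W * (2 ^ DIM('a) * E * H) + 2 powr R * (B * E * t powr (r / 2) * H))"
    using f0 f1 W0 by (intro mult_left_mono add_mono) auto
  also have "\<dots> \<le> exp (R * D) * (W * 2 ^ DIM('a) + 2 powr R * B) * E * (t powr (r / 2) + 1) * H"
  proof -
    have a: "W * (2 ^ DIM('a) * E * H) \<le> W * 2 ^ DIM('a) * E * (t powr (r / 2) + 1) * H"
    proof -
      have "W * 2 ^ DIM('a) * E * H * 1 \<le> W * 2 ^ DIM('a) * E * H * (t powr (r / 2) + 1)"
        using W0 E0 h0 by (intro mult_left_mono) auto
      then show ?thesis by (simp only: mult_ac mult_1_right)
    qed
    have b: "2 powr R * (B * E * t powr (r / 2) * H) \<le> 2 powr R * B * E * (t powr (r / 2) + 1) * H"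
    proof -
      have "2 powr R * B * E * H * t powr (r / 2) \<le> 2 powr R * B * E * H * (t powr (r / 2) + 1)"
        using B0 E0 h0 by (intro mult_left_mono) auto
      then show ?thesis by (simp only: mult_ac)
    qed
    have "W * (2 ^ DIM('a) * E * H) + 2 powr R * (B * E * t powr (r / 2) * H) \<le>
        (W * 2 ^ DIM('a) + 2 powr R * B) * E * (t powr (r / 2) + 1) * H"
      using add_mono[OF a b] by (simp add: algebra_simps)
    then show ?thesis by (simp only: mult.assoc) (intro mult_left_mono, auto)
  qed
  finally show ?thesis unfolding W_def B_def E_def H_def v_def .
qed




lemma box_norm:
  fixes x :: "'a::euclidean_space"
  assumes "\<forall>i\<in>Basis. \<bar>x \<bullet> i\<bar> \<le> K"
  shows "norm x \<le> K * real DIM('a)"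
proof -
  have "norm x \<le> (\<Sum>b\<in>Basis. \<bar>x \<bullet> b\<bar>)" by (rule norm_le_l1)
  also have "\<dots> \<le> (\<Sum>b\<in>(Basis::'a set). K)" using assms by (intro sum_mono) auto
  also have "\<dots> = K * real DIM('a)" by simp
  finally show ?thesis .
qed

lemma assemble:
  fixes F1 F2 :: "'a::euclidean_space \<Rightarrow> real" and S :: "'a \<Rightarrow> 'a \<Rightarrow> real" and \<alpha> Cc :: real
  assumes Cc: "\<forall>M (a::'a) (b::'a) s s'. 0 \<le> M \<longrightarrow> 0 < s \<longrightarrow> s \<le> s' \<longrightarrow>
    (\<integral>\<^sup>+w. \<integral>\<^sup>+z. ennreal (M * heat_kernel s (a - w) * heat_kernel s' (b - z) * (norm (w - z) powr (- \<alpha>) + 1)) \<partial>lborel \<partial>lborel)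
    \<le> ennreal (M * Cc * (s powr (- \<alpha> / 2) + 1))"
    and F1: "\<And>w. 0 \<le> F1 w" "\<And>w. F1 w \<le> A * heat_kernel s (a - w)"
    and F2: "\<And>z. 0 \<le> F2 z" "\<And>z. F2 z \<le> B * heat_kernel s' (b - z)"
    and AB: "0 \<le> A" "0 \<le> B" and s: "0 < s" "s \<le> s'"
  shows "(\<integral>\<^sup>+w. \<integral>\<^sup>+z. ennreal (F1 w * F2 z * (norm (w - z) powr (- \<alpha>) + 1)) \<partial>lborel \<partial>lborel)
    \<le> ennreal (A * B * Cc * (s powr (- \<alpha> / 2) + 1))"
proof -
  have "(\<integral>\<^sup>+w. \<integral>\<^sup>+z. ennreal (F1 w * F2 z * (norm (w - z) powr (- \<alpha>) + 1)) \<partial>lborel \<partial>lborel)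
    \<le> (\<integral>\<^sup>+w. \<integral>\<^sup>+z. ennreal ((A * B) * heat_kernel s (a - w) * heat_kernel s' (b - z) * (norm (w - z) powr (- \<alpha>) + 1)) \<partial>lborel \<partial>lborel)"
  proof (intro nn_integral_mono ennreal_leI)
    fix w z :: 'a
    have "F1 w * F2 z \<le> (A * heat_kernel s (a - w)) * (B * heat_kernel s' (b - z))"
      using F1 F2 AB by (intro mult_mono) (auto intro: mult_nonneg_nonneg hk_nonneg)
    then have "F1 w * F2 z * (norm (w - z) powr (- \<alpha>) + 1) \<le> (A * heat_kernel s (a - w)) * (B * heat_kernel s' (b - z)) * (norm (w - z) powr (- \<alpha>) + 1)"
      by (intro mult_right_mono) auto
    then show "F1 w * F2 z * (norm (w - z) powr (- \<alpha>) + 1) \<le> (A * B) * heat_kernel s (a - w) * heat_kernel s' (b - z) * (norm (w - z) powr (- \<alpha>) + 1)"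
      by (simp only: mult_ac)
  qed
  also have "\<dots> \<le> ennreal ((A * B) * Cc * (s powr (- \<alpha> / 2) + 1))"
    using Cc AB s by auto
  finally show ?thesis .
qed


lemma final_arith:
  fixes P E1 E2 E3 a b :: real
  assumes "0 \<le> P" "0 \<le> E1" "0 \<le> E2" "E1 * E2 \<le> E3" "0 \<le> a" "a \<le> b"
  shows "P * (E1 * E2) * (a + 1) \<le> P * E3 * (b + 1)"
proof -
  have "0 \<le> E1 * E2" using assms by simp
  then have E3: "0 \<le> E3" using assms(4) by linarith
  have "E1 * E2 * (a + 1) \<le> E3 * (b + 1)"
    using assms E3 by (intro mult_mono) auto
  then show ?thesis using assms(1) by (simp add: mult.assoc mult_left_mono)
qed

theorem lemma4p4:
  fixes \<alpha> R :: real
  assumes "0 < \<alpha>" and "\<alpha> < min 2 (real DIM('a::euclidean_space))" and "0 < R"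
  shows "(\<exists>C. \<forall>t t' r1 r2 r3. 0 < t \<longrightarrow> t \<le> t' \<longrightarrow>
            0 \<le> r1 \<longrightarrow> r1 \<le> R \<longrightarrow> 0 \<le> r2 \<longrightarrow> r2 \<le> R \<longrightarrow> 0 \<le> r3 \<longrightarrow> r3 \<le> R \<longrightarrow>
            (\<integral>\<^sup>+ w. \<integral>\<^sup>+ z. ennreal (heat_kernel t (w::'a) * heat_kernel t' (z::'a)
                 * norm w powr r1 * norm z powr r2 * exp (r3 * (norm w + norm z))
                 * (norm (w - z) powr (- \<alpha>) + 1)) \<partial>lborel \<partial>lborel)
            \<le> ennreal (C * exp (2 * r3\<^sup>2 * t') * t powr (r1 / 2) * t' powr (r2 / 2)
                        * (t powr (- \<alpha> / 2) + 1)))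
       \<and> (\<forall>K>0. \<exists>C. \<forall>(x::'a) (y::'a) t t' r1 r2 r3.
            (\<forall>i\<in>Basis. \<bar>x \<bullet> i\<bar> \<le> K) \<longrightarrow> (\<forall>i\<in>Basis. \<bar>y \<bullet> i\<bar> \<le> K) \<longrightarrow>
            0 < t \<longrightarrow> t \<le> t' \<longrightarrow>
            0 \<le> r1 \<longrightarrow> r1 \<le> R \<longrightarrow> 0 \<le> r2 \<longrightarrow> r2 \<le> R \<longrightarrow> 0 \<le> r3 \<longrightarrow> r3 \<le> R \<longrightarrow>
            (\<integral>\<^sup>+ w. \<integral>\<^sup>+ z. ennreal (heat_kernel t (x - w) * heat_kernel t' (y - z)
                 * norm w powr r1 * norm z powr r2 * exp (r3 * (norm w + norm z))
                 * (norm (w - z) powr (- \<alpha>) + 1)) \<partial>lborel \<partial>lborel)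
            \<le> ennreal (C * exp (2 * r3\<^sup>2 * t') * (t powr (r1 / 2) + 1) * (t' powr (r2 / 2) + 1)
                        * (t powr (- \<alpha> / 2) + 1)))"
proof -
  have aq: "\<alpha> < real DIM('a)" using assms(2) by simp
  obtain Cc where Cc0: "0 \<le> Cc" and CcP: "\<forall>M (a::'a) (b::'a) s s'. 0 \<le> M \<longrightarrow> 0 < s \<longrightarrow> s \<le> s' \<longrightarrow>
    (\<integral>\<^sup>+w. \<integral>\<^sup>+z. ennreal (M * heat_kernel s (a - w) * heat_kernel s' (b - z) * (norm (w - z) powr (- \<alpha>) + 1)) \<partial>lborel \<partial>lborel)
    \<le> ennreal (M * Cc * (s powr (- \<alpha> / 2) + 1))"
    using core_bound[OF assms(1) aq] by blast
  define BR where "BR = (1 + 8 ^ nat \<lceil>R\<rceil> * fact (nat \<lceil>R\<rceil>) :: real)"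
  define Kw where "Kw = 2 ^ DIM('a) * BR"
  have Kw0: "0 \<le> Kw" unfolding Kw_def BR_def by simp
  have pow4: "(4 * t) powr (- \<alpha> / 2) \<le> t powr (- \<alpha> / 2)" if "0 < t" for t :: real
    using that assms(1) by (intro powr_mono2') auto
  have expE: "exp (r3\<^sup>2 * t) * exp (r3\<^sup>2 * t') \<le> exp (2 * r3\<^sup>2 * t')" if "t \<le> t'" for t t' r3 :: real
  proof -
    have "r3\<^sup>2 * t \<le> r3\<^sup>2 * t'" using that by (intro mult_left_mono) auto
    then have "r3\<^sup>2 * t + r3\<^sup>2 * t' \<le> 2 * r3\<^sup>2 * t'" by linarith
    then show ?thesis by (simp only: exp_add[symmetric] exp_le_cancel_iff)
  qed
  have hk0: "heat_kernel s (0 - v) = heat_kernel s v" for s and v :: 'a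
    by (simp add: heat_kernel_def)
  show ?thesis
  proof (intro conjI allI impI)
    show "\<exists>C. \<forall>t t' r1 r2 r3. 0 < t \<longrightarrow> t \<le> t' \<longrightarrow>
            0 \<le> r1 \<longrightarrow> r1 \<le> R \<longrightarrow> 0 \<le> r2 \<longrightarrow> r2 \<le> R \<longrightarrow> 0 \<le> r3 \<longrightarrow> r3 \<le> R \<longrightarrow>
            (\<integral>\<^sup>+ w. \<integral>\<^sup>+ z. ennreal (heat_kernel t (w::'a) * heat_kernel t' (z::'a)
                 * norm w powr r1 * norm z powr r2 * exp (r3 * (norm w + norm z))
                 * (norm (w - z) powr (- \<alpha>) + 1)) \<partial>lborel \<partial>lborel)
            \<le> ennreal (C * exp (2 * r3\<^sup>2 * t') * t powr (r1 / 2) * t' powr (r2 / 2)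
                        * (t powr (- \<alpha> / 2) + 1))"
    proof (intro exI[of _ "Kw * Kw * Cc"] allI impI)
      fix t t' r1 r2 r3 :: real
      assume t: "0 < t" and tt: "t \<le> t'" and r1: "0 \<le> r1" "r1 \<le> R" and r2: "0 \<le> r2" "r2 \<le> R"
        and r3: "0 \<le> r3" "r3 \<le> R"
      have t': "0 < t'" using t tt by linarith
      define F1 where "F1 w = heat_kernel t w * exp (r3 * norm w) * norm w powr r1" for w :: 'a
      define F2 where "F2 z = heat_kernel t' z * exp (r3 * norm z) * norm z powr r2" for z :: 'a
      define A where "A = Kw * exp (r3\<^sup>2 * t) * t powr (r1 / 2)"
      define B where "B = Kw * exp (r3\<^sup>2 * t') * t' powr (r2 / 2)"
      have eq: "(\<integral>\<^sup>+ w. \<integral>\<^sup>+ z. ennreal (heat_kernel t (w::'a) * heat_kernel t' (z::'a)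
                 * norm w powr r1 * norm z powr r2 * exp (r3 * (norm w + norm z))
                 * (norm (w - z) powr (- \<alpha>) + 1)) \<partial>lborel \<partial>lborel)
         = (\<integral>\<^sup>+w. \<integral>\<^sup>+z. ennreal (F1 w * F2 z * (norm (w - z) powr (- \<alpha>) + 1)) \<partial>lborel \<partial>lborel)"
        unfolding F1_def F2_def by (simp add: distrib_left exp_add ac_simps)
      have "(\<integral>\<^sup>+w. \<integral>\<^sup>+z. ennreal (F1 w * F2 z * (norm (w - z) powr (- \<alpha>) + 1)) \<partial>lborel \<partial>lborel)
          \<le> ennreal (A * B * Cc * ((4 * t) powr (- \<alpha> / 2) + 1))"
      proof (rule assemble[OF CcP, where a=0 and b=0])
        show "0 \<le> F1 w" for w unfolding F1_def by (simp add: hk_nonneg)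
        show "0 \<le> F2 z" for z unfolding F2_def by (simp add: hk_nonneg)
        show "F1 w \<le> A * heat_kernel (4 * t) (0 - w)" for w
          unfolding F1_def A_def Kw_def BR_def hk0 using hk_factor[OF t r1, of w r3] by (simp only: mult_ac)
        show "F2 z \<le> B * heat_kernel (4 * t') (0 - z)" for z
          unfolding F2_def B_def Kw_def BR_def hk0 using hk_factor[OF t' r2, of z r3] by (simp only: mult_ac)
        show "0 \<le> A" unfolding A_def using Kw0 by simp
        show "0 \<le> B" unfolding B_def using Kw0 by simp
        show "0 < 4 * t" using t by simp
        show "4 * t \<le> 4 * t'" using tt by simp
      qed
      also have "\<dots> \<le> ennreal (Kw * Kw * Cc * exp (2 * r3\<^sup>2 * t') * t powr (r1 / 2) * t' powr (r2 / 2) * (t powr (- \<alpha> / 2) + 1))"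
      proof (rule ennreal_leI)
        have "(Kw * Kw * Cc * t powr (r1 / 2) * t' powr (r2 / 2)) * (exp (r3\<^sup>2 * t) * exp (r3\<^sup>2 * t')) * ((4 * t) powr (- \<alpha> / 2) + 1)
           \<le> (Kw * Kw * Cc * t powr (r1 / 2) * t' powr (r2 / 2)) * exp (2 * r3\<^sup>2 * t') * (t powr (- \<alpha> / 2) + 1)"
          using Kw0 Cc0 pow4[OF t] expE[OF tt] by (intro final_arith) auto
        then show "A * B * Cc * ((4 * t) powr (- \<alpha> / 2) + 1) \<le> Kw * Kw * Cc * exp (2 * r3\<^sup>2 * t') * t powr (r1 / 2) * t' powr (r2 / 2) * (t powr (- \<alpha> / 2) + 1)"
          unfolding A_def B_def by (simp only: mult_ac)
      qed
      finally show "(\<integral>\<^sup>+ w. \<integral>\<^sup>+ z. ennreal (heat_kernel t (w::'a) * heat_kernel t' (z::'a)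
                 * norm w powr r1 * norm z powr r2 * exp (r3 * (norm w + norm z))
                 * (norm (w - z) powr (- \<alpha>) + 1)) \<partial>lborel \<partial>lborel)
            \<le> ennreal (Kw * Kw * Cc * exp (2 * r3\<^sup>2 * t') * t powr (r1 / 2) * t' powr (r2 / 2)
                        * (t powr (- \<alpha> / 2) + 1))" unfolding eq .
    qed
  next
    fix K :: real assume K: "0 < K"
    define D where "D = K * real DIM('a)"
    have D0: "0 \<le> D" unfolding D_def using K by simp
    define K2 where "K2 = exp (R * D) * ((2 * D + 1) powr R * 2 ^ DIM('a) + 2 powr R * (2 ^ DIM('a) * BR))"
    have K20: "0 \<le> K2" unfolding K2_def BR_def by simp
    show "\<exists>C. \<forall>(x::'a) (y::'a) t t' r1 r2 r3.
            (\<forall>i\<in>Basis. \<bar>x \<bullet> i\<bar> \<le> K) \<longrightarrow> (\<forall>i\<in>Basis. \<bar>y \<bullet> i\<bar> \<le> K) \<longrightarrow>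
            0 < t \<longrightarrow> t \<le> t' \<longrightarrow>
            0 \<le> r1 \<longrightarrow> r1 \<le> R \<longrightarrow> 0 \<le> r2 \<longrightarrow> r2 \<le> R \<longrightarrow> 0 \<le> r3 \<longrightarrow> r3 \<le> R \<longrightarrow>
            (\<integral>\<^sup>+ w. \<integral>\<^sup>+ z. ennreal (heat_kernel t (x - w) * heat_kernel t' (y - z)
                 * norm w powr r1 * norm z powr r2 * exp (r3 * (norm w + norm z))
                 * (norm (w - z) powr (- \<alpha>) + 1)) \<partial>lborel \<partial>lborel)
            \<le> ennreal (C * exp (2 * r3\<^sup>2 * t') * (t powr (r1 / 2) + 1) * (t' powr (r2 / 2) + 1)
                        * (t powr (- \<alpha> / 2) + 1))"
    proof (intro exI[of _ "K2 * K2 * Cc"] allI impI)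
      fix x y :: 'a and t t' r1 r2 r3 :: real
      assume x: "\<forall>i\<in>Basis. \<bar>x \<bullet> i\<bar> \<le> K" and y: "\<forall>i\<in>Basis. \<bar>y \<bullet> i\<bar> \<le> K"
        and t: "0 < t" and tt: "t \<le> t'" and r1: "0 \<le> r1" "r1 \<le> R" and r2: "0 \<le> r2" "r2 \<le> R"
        and r3: "0 \<le> r3" "r3 \<le> R"
      have t': "0 < t'" using t tt by linarith
      have xD: "norm x \<le> D" unfolding D_def by (rule box_norm[OF x])
      have yD: "norm y \<le> D" unfolding D_def by (rule box_norm[OF y])
      define F1 where "F1 w = heat_kernel t (x - w) * exp (r3 * norm w) * norm w powr r1" for w :: 'a
      define F2 where "F2 z = heat_kernel t' (y - z) * exp (r3 * norm z) * norm z powr r2" for z :: 'a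
      define A where "A = K2 * exp (r3\<^sup>2 * t) * (t powr (r1 / 2) + 1)"
      define B where "B = K2 * exp (r3\<^sup>2 * t') * (t' powr (r2 / 2) + 1)"
      have eq: "(\<integral>\<^sup>+ w. \<integral>\<^sup>+ z. ennreal (heat_kernel t (x - w) * heat_kernel t' (y - z)
                 * norm w powr r1 * norm z powr r2 * exp (r3 * (norm w + norm z))
                 * (norm (w - z) powr (- \<alpha>) + 1)) \<partial>lborel \<partial>lborel)
         = (\<integral>\<^sup>+w. \<integral>\<^sup>+z. ennreal (F1 w * F2 z * (norm (w - z) powr (- \<alpha>) + 1)) \<partial>lborel \<partial>lborel)"
        unfolding F1_def F2_def by (simp add: distrib_left exp_add ac_simps)
      have "(\<integral>\<^sup>+w. \<integral>\<^sup>+z. ennreal (F1 w * F2 z * (norm (w - z) powr (- \<alpha>) + 1)) \<partial>lborel \<partial>lborel)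
          \<le> ennreal (A * B * Cc * ((4 * t) powr (- \<alpha> / 2) + 1))"
      proof (rule assemble[OF CcP, where a=x and b=y])
        show "0 \<le> F1 w" for w unfolding F1_def by (simp add: hk_nonneg)
        show "0 \<le> F2 z" for z unfolding F2_def by (simp add: hk_nonneg)
        show "F1 w \<le> A * heat_kernel (4 * t) (x - w)" for w
          unfolding F1_def A_def K2_def BR_def using hk_factor_shift[OF t r1 r3 D0 xD, of w] by (simp only: mult_ac)
        show "F2 z \<le> B * heat_kernel (4 * t') (y - z)" for z
          unfolding F2_def B_def K2_def BR_def using hk_factor_shift[OF t' r2 r3 D0 yD, of z] by (simp only: mult_ac)
        show "0 \<le> A" unfolding A_def using K20 by simp
        show "0 \<le> B" unfolding B_def using K20 by simp
        show "0 < 4 * t" using t by simp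
        show "4 * t \<le> 4 * t'" using tt by simp
      qed
      also have "\<dots> \<le> ennreal (K2 * K2 * Cc * exp (2 * r3\<^sup>2 * t') * (t powr (r1 / 2) + 1) * (t' powr (r2 / 2) + 1) * (t powr (- \<alpha> / 2) + 1))"
      proof (rule ennreal_leI)
        have "(K2 * K2 * Cc * (t powr (r1 / 2) + 1) * (t' powr (r2 / 2) + 1)) * (exp (r3\<^sup>2 * t) * exp (r3\<^sup>2 * t')) * ((4 * t) powr (- \<alpha> / 2) + 1)
           \<le> (K2 * K2 * Cc * (t powr (r1 / 2) + 1) * (t' powr (r2 / 2) + 1)) * exp (2 * r3\<^sup>2 * t') * (t powr (- \<alpha> / 2) + 1)"
          using K20 Cc0 pow4[OF t] expE[OF tt] by (intro final_arith) auto
        then show "A * B * Cc * ((4 * t) powr (- \<alpha> / 2) + 1) \<le> K2 * K2 * Cc * exp (2 * r3\<^sup>2 * t') * (t powr (r1 / 2) + 1) * (t' powr (r2 / 2) + 1) * (t powr (- \<alpha> / 2) + 1)"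
          unfolding A_def B_def by (simp only: mult_ac)
      qed
      finally show "(\<integral>\<^sup>+ w. \<integral>\<^sup>+ z. ennreal (heat_kernel t (x - w) * heat_kernel t' (y - z)
                 * norm w powr r1 * norm z powr r2 * exp (r3 * (norm w + norm z))
                 * (norm (w - z) powr (- \<alpha>) + 1)) \<partial>lborel \<partial>lborel)
            \<le> ennreal (K2 * K2 * Cc * exp (2 * r3\<^sup>2 * t') * (t powr (r1 / 2) + 1) * (t' powr (r2 / 2) + 1)
                        * (t powr (- \<alpha> / 2) + 1))" unfolding eq .
    qed
  qed
qed



end
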